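(* The zero-error feedback capacity of a finite-state erasure channel with maximal ratio $\tau$ is $C_{0f}=1-\tau$.
   Context: Logarithms are to base $q=|\mathcal{X}|\ge2$, $\mathcal{X}$ the finite input alphabet. Finite-state erasure channel: a strongly connected directed graph $\mathscr{G}=(\mathcal{S},\mathcal{E})$ with finite vertex set $\mathcal{S}$ (channel states) and $\mathcal{E}\subseteq\mathcal{S}\times\mathcal{S}$, each edge labelled $\ell(e)\in\{0,1\}$, distinct edges leaving the same state having distinct labels. A noise word $v(0:n)$ is admissible from initial state $s_0$ if it is the label sequence of a walk starting at $s_0$; output $y(t)=x(t)$ if $v(t)=0$ and $y(t)=*$ (a symbol not in $\mathcal{X}$) if $v(t)=1$. The initial state is arbitrary and unknown. The maximal ratio is $\tau=\max_i e_i/l_i$ over directed simple cycles ($e_i$ = number of edges labelled 1, $l_i$ = length). Zero-error feedback code of block length $n+1$: a finite message set $\mathcal{M}$ and encoding functions $f_t:\mathcal{M}\times(\mathcal{X}\cup\{*\})^t\to\mathcal{X}$, $t=0,\dots,n$, with channel input $x(t)=f_t(m,y(0:t-1))$; it is zero-error if no output word $y(0:n)$ can arise (for any initial state and any admissible noise) from two distinct messages. $C_{0f}=\sup_{n\in\mathbb{N}_0}\sup \log|\mathcal{M}|/(n+1)$ over all zero-error feedback codes of block length $n+1$. *)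

theory Defs
  imports Complex_Main
begin

text \<open>Finite-state erasure channel: vertex set S (channel states), edge set E,
  edge labelling lab (True = label 1 = erasure, False = label 0).\<close>

definition fs_erasure_channel :: "'s set \<Rightarrow> ('s \<times> 's) set \<Rightarrow> ('s \<times> 's \<Rightarrow> bool) \<Rightarrow> bool" where
  "fs_erasure_channel S E lab \<longleftrightarrow>
     finite S \<and> S \<noteq> {} \<and> E \<subseteq> S \<times> S \<and>
     (\<forall>s\<in>S. \<forall>t\<in>S. (s, t) \<in> E\<^sup>+) \<and>
     (\<forall>s t t'. (s, t) \<in> E \<longrightarrow> (s, t') \<in> E \<longrightarrow> t \<noteq> t' \<longrightarrow> lab (s, t) \<noteq> lab (s, t'))"

definition admissible :: "('s \<times> 's) set \<Rightarrow> ('s \<times> 's \<Rightarrow> bool) \<Rightarrow> 's \<Rightarrow> bool list \<Rightarrow> bool" where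
  "admissible E lab s0 v \<longleftrightarrow>
     (\<exists>p :: nat \<Rightarrow> 's. p 0 = s0 \<and>
        (\<forall>i < length v. (p i, p (Suc i)) \<in> E \<and> lab (p i, p (Suc i)) = v ! i))"

definition simple_cycle :: "('s \<times> 's) set \<Rightarrow> 's list \<Rightarrow> bool" where
  "simple_cycle E cs \<longleftrightarrow> cs \<noteq> [] \<and> distinct cs \<and>
     (\<forall>i < length cs. (cs ! i, cs ! ((i + 1) mod length cs)) \<in> E)"

definition cycle_ones :: "('s \<times> 's \<Rightarrow> bool) \<Rightarrow> 's list \<Rightarrow> nat" where
  "cycle_ones lab cs = card {i. i < length cs \<and> lab (cs ! i, cs ! ((i + 1) mod length cs))}"

definition max_ratio :: "('s \<times> 's) set \<Rightarrow> ('s \<times> 's \<Rightarrow> bool) \<Rightarrow> real" where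
  "max_ratio E lab = Max {real (cycle_ones lab cs) / real (length cs) | cs. simple_cycle E cs}"

text \<open>Channel output under a feedback encoder f (f t m ys = x(t), ys = y(0:t-1)); the
  erasure symbol * is None.  outp f m v t = y(0:t-1).\<close>

fun outp :: "(nat \<Rightarrow> 'm \<Rightarrow> 'x option list \<Rightarrow> 'x) \<Rightarrow> 'm \<Rightarrow> bool list \<Rightarrow> nat \<Rightarrow> 'x option list" where
  "outp f m v 0 = []"
| "outp f m v (Suc t) =
     (let ys = outp f m v t in ys @ [if v ! t then None else Some (f t m ys)])"

definition channel_output :: "(nat \<Rightarrow> 'm \<Rightarrow> 'x option list \<Rightarrow> 'x) \<Rightarrow> 'm \<Rightarrow> bool list \<Rightarrow> 'x option list" where
  "channel_output f m v = outp f m v (length v)"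

text \<open>Zero-error feedback code of block length n+1 with message set M.\<close>

definition zero_error_fb_code ::
  "'s set \<Rightarrow> ('s \<times> 's) set \<Rightarrow> ('s \<times> 's \<Rightarrow> bool) \<Rightarrow> nat \<Rightarrow> 'm set \<Rightarrow> (nat \<Rightarrow> 'm \<Rightarrow> 'x option list \<Rightarrow> 'x) \<Rightarrow> bool" where
  "zero_error_fb_code S E lab n M f \<longleftrightarrow> finite M \<and> M \<noteq> {} \<and>
     (\<forall>m1\<in>M. \<forall>m2\<in>M. \<forall>s1\<in>S. \<forall>s2\<in>S. \<forall>v1 v2.
        m1 \<noteq> m2 \<longrightarrow> length v1 = Suc n \<longrightarrow> length v2 = Suc n \<longrightarrow>
        admissible E lab s1 v1 \<longrightarrow> admissible E lab s2 v2 \<longrightarrow>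
        channel_output f m1 v1 \<noteq> channel_output f m2 v2)"

definition C0f :: "'x itself \<Rightarrow> 's set \<Rightarrow> ('s \<times> 's) set \<Rightarrow> ('s \<times> 's \<Rightarrow> bool) \<Rightarrow> real" where
  "C0f _ S E lab = Sup {r. \<exists>n (M :: nat set) (f :: nat \<Rightarrow> nat \<Rightarrow> 'x option list \<Rightarrow> 'x).
        zero_error_fb_code S E lab n M f \<and>
        r = log (real (card (UNIV :: 'x set))) (real (card M)) / real (Suc n)}"

end

theory Submission
  imports Defs
begin

fun wk :: "('s \<times> 's) set \<Rightarrow> 's list \<Rightarrow> bool" where
  "wk E (a # b # r) = ((a, b) \<in> E \<and> wk E (b # r))"
| "wk E _ = True"

fun wo :: "('s \<times> 's \<Rightarrow> bool) \<Rightarrow> 's list \<Rightarrow> nat" where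
  "wo lab (a # b # r) = (if lab (a, b) then 1 else 0) + wo lab (b # r)"
| "wo lab _ = 0"

lemma wk_append: "wk E (xs @ y # ys) \<longleftrightarrow> wk E (xs @ [y]) \<and> wk E (y # ys)"
proof (induction xs)
  case (Cons a xs) then show ?case by (cases xs) auto
qed auto

lemma wo_append: "wo lab (xs @ y # ys) = wo lab (xs @ [y]) + wo lab (y # ys)"
proof (induction xs)
  case (Cons a xs) then show ?case by (cases xs) auto
qed auto

lemma wk_nth: "wk E ws \<longleftrightarrow> (\<forall>i. Suc i < length ws \<longrightarrow> (ws ! i, ws ! Suc i) \<in> E)"
proof (induction ws)
  case (Cons a ws)
  show ?case
  proof (cases ws)
    case (Cons b r)
    show ?thesis using Cons.IH unfolding Cons
      by (auto simp: less_Suc_eq_0_disj nth_Cons split: nat.splits)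
  qed auto
qed auto

lemma wo_sum: "wo lab ws = (\<Sum>i<length ws - 1. if lab (ws ! i, ws ! Suc i) then 1 else 0)"
proof (induction ws)
  case (Cons a ws)
  show ?case
  proof (cases ws)
    case (Cons b r)
    show ?thesis using Cons.IH unfolding Cons
      by (simp add: sum.lessThan_Suc_shift del: sum.lessThan_Suc)
  qed auto
qed auto

lemma cyc_nth:
  assumes "cs \<noteq> []" "i < length cs"
  shows "(cs @ [hd cs]) ! i = cs ! i" "(cs @ [hd cs]) ! Suc i = cs ! ((i + 1) mod length cs)"
proof -
  show "(cs @ [hd cs]) ! i = cs ! i" using assms by (simp add: nth_append)
  show "(cs @ [hd cs]) ! Suc i = cs ! ((i + 1) mod length cs)"
  proof (cases "Suc i < length cs")
    case True then show ?thesis by (simp add: nth_append)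
  next
    case False
    then have "Suc i = length cs" using assms by simp
    then show ?thesis using assms by (simp add: nth_append hd_conv_nth)
  qed
qed

lemma cyc_wk: "cs \<noteq> [] \<Longrightarrow> wk E (cs @ [hd cs]) \<longleftrightarrow> (\<forall>i<length cs. (cs ! i, cs ! ((i + 1) mod length cs)) \<in> E)"
  unfolding wk_nth by (auto simp: cyc_nth)

lemma card_sum_if: "card {i. i < (n::nat) \<and> P i} = (\<Sum>i<n. if P i then 1 else 0)"
proof (induction n)
  case (Suc n)
  have "{i. i < Suc n \<and> P i} = {i. i < n \<and> P i} \<union> (if P n then {n} else {})"
    by (auto simp: less_Suc_eq)
  then show ?case using Suc by (simp add: card_insert_if)
qed simp

lemma cyc_wo: "cs \<noteq> [] \<Longrightarrow> wo lab (cs @ [hd cs]) = cycle_ones lab cs"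
  unfolding wo_sum cycle_ones_def card_sum_if
  by (auto simp: cyc_nth intro!: sum.cong)

lemma closed_decomp:
  assumes "length W \<ge> 2" "hd W = last W"
  shows "(distinct (butlast W) \<and> butlast W \<noteq> [] \<and> W = butlast W @ [hd (butlast W)])
     \<or> (\<exists>A z B C. W = A @ [z] @ B @ [z] @ C \<and> C \<noteq> [])"
proof (cases "distinct (butlast W)")
  case True
  have ne: "butlast W \<noteq> []" using assms(1) by (cases W rule: rev_cases) auto
  have "hd (butlast W) = hd W" using ne by (cases W rule: rev_cases) auto
  then have "W = butlast W @ [hd (butlast W)]" using assms ne
    by (metis append_butlast_last_id butlast.simps(1))
  then show ?thesis using True ne by blast
next
  case False
  then obtain A z B C where "butlast W = A @ [z] @ B @ [z] @ C"
    using not_distinct_decomp by blast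
  then have "W = A @ [z] @ B @ [z] @ (C @ [last W])"
    using assms(1) by (metis append_assoc append_butlast_last_id list.size(3) not_numeral_le_zero)
  then show ?thesis by blast
qed

lemma wk_split3:
  assumes "wk E (A @ [z] @ B @ [z] @ C)"
  shows "wk E (z # B @ [z])" "wk E (A @ [z] @ C)"
proof -
  have 1: "wk E (A @ [z])" "wk E (z # (B @ z # C))"
    using assms wk_append[of E A z "B @ z # C"] by auto
  have 2: "wk E ((z # B) @ [z])" "wk E (z # C)"
    using 1(2) wk_append[of E "z # B" z C] by auto
  show "wk E (z # B @ [z])" using 2 by simp
  show "wk E (A @ [z] @ C)" using 1(1) 2(2) wk_append[of E A z C] by simp
qed

lemma wo_split3:
  "wo lab (A @ [z] @ B @ [z] @ C) = wo lab (z # B @ [z]) + wo lab (A @ [z] @ C)"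
proof -
  have "wo lab (A @ [z] @ B @ [z] @ C) = wo lab (A @ [z]) + wo lab (z # (B @ z # C))"
    using wo_append[of lab A z "B @ z # C"] by simp
  also have "wo lab (z # (B @ z # C)) = wo lab ((z # B) @ [z]) + wo lab (z # C)"
    using wo_append[of lab "z # B" z C] by simp
  finally show ?thesis using wo_append[of lab A z C] by simp
qed

lemma hd_last_split3:
  assumes "W = A @ [z] @ B @ [z] @ C" "C \<noteq> []" "hd W = last W"
  shows "hd (A @ [z] @ C) = last (A @ [z] @ C)"
  using assms by (cases A) auto

locale chan =
  fixes S :: "'s set" and E :: "('s \<times> 's) set" and lab :: "'s \<times> 's \<Rightarrow> bool"
  assumes ch: "fs_erasure_channel S E lab"
begin

lemma finS: "finite S" and neS: "S \<noteq> {}" and subE: "E \<subseteq> S \<times> S"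
  and conn: "\<And>s t. s \<in> S \<Longrightarrow> t \<in> S \<Longrightarrow> (s, t) \<in> E\<^sup>+"
  using ch unfolding fs_erasure_channel_def by auto

lemma cyc_set: assumes "simple_cycle E cs" shows "set cs \<subseteq> S"
proof
  fix x assume "x \<in> set cs"
  then obtain i where i: "i < length cs" "x = cs ! i" by (auto simp: in_set_conv_nth)
  then have "(cs ! i, cs ! ((i + 1) mod length cs)) \<in> E" using assms unfolding simple_cycle_def by auto
  then show "x \<in> S" using subE i by auto
qed

lemma cyc_len: assumes c: "simple_cycle E cs" shows "length cs \<le> card S"
proof -
  have "length cs = card (set cs)" using c distinct_card unfolding simple_cycle_def by metis
  also have "\<dots> \<le> card S" using card_mono[OF finS cyc_set[OF c]] .
  finally show "length cs \<le> card S" .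
qed

lemma fin_cyc: "finite {cs. simple_cycle E cs}"
  by (rule finite_subset[OF _ finite_lists_length_le[OF finS, of "card S"]])
     (use cyc_set cyc_len in blast)

lemma trancl_walk: "(a, b) \<in> E\<^sup>+ \<Longrightarrow> \<exists>W. wk E W \<and> hd W = a \<and> last W = b \<and> length W \<ge> 2"
proof (induction rule: converse_trancl_induct)
  case (base y)
  then show ?case by (intro exI[of _ "[y, b]"]) auto
next
  case (step x y)
  then obtain W where W: "wk E W" "hd W = y" "last W = b" "length W \<ge> 2" by blast
  then obtain r where "W = y # r" by (cases W) auto
  then show ?case using W step by (intro exI[of _ "x # W"]) auto
qed

lemma closed_has_cycle: "wk E W \<Longrightarrow> length W \<ge> 2 \<Longrightarrow> hd W = last W \<Longrightarrow> \<exists>cs. simple_cycle E cs"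
proof (induction "length W" arbitrary: W rule: less_induct)
  case less
  show ?case
  proof (cases rule: disjE[OF closed_decomp[OF less(3) less(4)]])
    case 1
    then have "simple_cycle E (butlast W)" using less(2) cyc_wk[of "butlast W" E]
      unfolding simple_cycle_def by metis
    then show ?thesis by blast
  next
    case 2
    then obtain A z B C where d: "W = A @ [z] @ B @ [z] @ C" "C \<noteq> []" by blast
    show ?thesis
      by (rule less(1)[of "z # B @ [z]"]) (use d wk_split3[of E A z B C] less(2) in auto)
  qed
qed

lemma ex_cyc: "\<exists>cs. simple_cycle E cs"
proof -
  obtain s where "s \<in> S" using neS by blast
  then obtain W where "wk E W" "hd W = s" "last W = s" "length W \<ge> 2" using trancl_walk conn by blast
  then show ?thesis using closed_has_cycle by auto
qed

definition "Rset = {real (cycle_ones lab cs) / real (length cs) | cs. simple_cycle E cs}"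

lemma finR: "finite Rset" and neR: "Rset \<noteq> {}"
proof -
  have "Rset = (\<lambda>cs. real (cycle_ones lab cs) / real (length cs)) ` {cs. simple_cycle E cs}"
    unfolding Rset_def by auto
  then show "finite Rset" using fin_cyc by simp
  show "Rset \<noteq> {}" using ex_cyc unfolding Rset_def by auto
qed

abbreviation "tau \<equiv> max_ratio E lab"

lemma tau_Max: "tau = Max Rset" unfolding max_ratio_def Rset_def by simp

lemma ones_le_len: "cycle_ones lab cs \<le> length cs"
proof -
  have "cycle_ones lab cs \<le> card {..<length cs}" unfolding cycle_ones_def
    by (rule card_mono) auto
  then show ?thesis by simp
qed

lemma cyc_le_tau: "simple_cycle E cs \<Longrightarrow> real (cycle_ones lab cs) \<le> tau * real (length cs)"
proof -
  assume c: "simple_cycle E cs"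
  then have "real (cycle_ones lab cs) / real (length cs) \<le> tau"
    unfolding tau_Max by (intro Max_ge finR) (auto simp: Rset_def)
  moreover have "length cs > 0" using c unfolding simple_cycle_def by simp
  ultimately show ?thesis by (simp add: divide_le_eq)
qed

lemma tau_in: "\<exists>cs. simple_cycle E cs \<and> tau = real (cycle_ones lab cs) / real (length cs)"
  using Max_in[OF finR neR] unfolding tau_Max Rset_def by auto

lemma tau_ge0: "0 \<le> tau" and tau_le1: "tau \<le> 1"
proof -
  obtain cs where c: "simple_cycle E cs" "tau = real (cycle_ones lab cs) / real (length cs)"
    using tau_in by blast
  then show "0 \<le> tau" by simp
  show "tau \<le> 1" using c ones_le_len[of cs] by (simp add: divide_le_eq_1)
qed

lemma closed_bound: "wk E W \<Longrightarrow> W \<noteq> [] \<Longrightarrow> hd W = last W \<Longrightarrow> real (wo lab W) \<le> tau * real (length W - 1)"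
proof (induction "length W" arbitrary: W rule: less_induct)
  case less
  show ?case
  proof (cases "length W \<ge> 2")
    case False
    then obtain a where "W = [a]" using less(3) by (cases W; cases "tl W") auto
    then show ?thesis by simp
  next
    case True
    show ?thesis
    proof (cases rule: disjE[OF closed_decomp[OF True less(4)]])
      case 1
      let ?cs = "butlast W"
      have sc: "simple_cycle E ?cs" using 1 less(2) cyc_wk[of ?cs E]
        unfolding simple_cycle_def by metis
      have "wo lab W = cycle_ones lab ?cs" using 1 cyc_wo[of ?cs lab] by metis
      moreover have "length ?cs = length W - 1" by simp
      ultimately show ?thesis using cyc_le_tau[OF sc] by simp
    next
      case 2
      then obtain A z B C where d: "W = A @ [z] @ B @ [z] @ C" "C \<noteq> []" by blast
      have w: "wk E (z # B @ [z])" "wk E (A @ [z] @ C)" using wk_split3[of E A z B C] less(2) d by auto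
      have h: "hd (A @ [z] @ C) = last (A @ [z] @ C)" using hd_last_split3[OF d less(4)] .
      have i1: "real (wo lab (z # B @ [z])) \<le> tau * real (length (z # B @ [z]) - 1)"
        by (rule less(1)) (use d w in auto)
      have i2: "real (wo lab (A @ [z] @ C)) \<le> tau * real (length (A @ [z] @ C) - 1)"
        by (rule less(1)) (use d w h in auto)
      have "wo lab W = wo lab (z # B @ [z]) + wo lab (A @ [z] @ C)" using d wo_split3 by metis
      moreover have "real (length W - 1) = real (length (z # B @ [z]) - 1) + real (length (A @ [z] @ C) - 1)"
        using d by simp
      ultimately show ?thesis using i1 i2 by (simp add: distrib_left)
    qed
  qed
qed

lemma back_walks: "\<exists>D. \<forall>a\<in>S. \<forall>b\<in>S. \<exists>P. wk E P \<and> hd P = a \<and> last P = b \<and> P \<noteq> [] \<and> length P \<le> D"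
proof -
  have "\<forall>x\<in>S \<times> S. \<exists>P. wk E P \<and> hd P = fst x \<and> last P = snd x \<and> P \<noteq> []"
    using trancl_walk conn by fastforce
  then obtain g where g: "\<forall>x\<in>S \<times> S. wk E (g x) \<and> hd (g x) = fst x \<and> last (g x) = snd x \<and> g x \<noteq> []"
    by (metis (no_types) bchoice)
  define D where "D = Max ((\<lambda>x. length (g x)) ` (S \<times> S))"
  have "\<forall>x\<in>S \<times> S. length (g x) \<le> D" unfolding D_def using finS by (intro ballI Max_ge) auto
  then show ?thesis using g by (intro exI[of _ D]) fastforce
qed

lemma walk_bound: "\<exists>D::nat. \<forall>s0 v. s0 \<in> S \<longrightarrow> admissible E lab s0 v \<longrightarrow>
   real (card {i. i < length v \<and> v ! i}) \<le> tau * real (length v) + real D"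
proof -
  obtain D where D: "\<forall>a\<in>S. \<forall>b\<in>S. \<exists>P. wk E P \<and> hd P = a \<and> last P = b \<and> P \<noteq> [] \<and> length P \<le> D"
    using back_walks by blast
  have "real (card {i. i < length v \<and> v ! i}) \<le> tau * real (length v) + real D"
    if s0: "s0 \<in> S" and ad: "admissible E lab s0 v" for s0 v
  proof -
    define N where "N = length v"
    obtain p where p: "p 0 = s0" "\<And>i. i < N \<Longrightarrow> (p i, p (Suc i)) \<in> E \<and> lab (p i, p (Suc i)) = v ! i"
      using ad unfolding admissible_def N_def by blast
    define xs where "xs = map p [0..<N]"
    define W where "W = xs @ [p N]"
    have W: "W = map p [0..<Suc N]" unfolding W_def xs_def by simp
    have wkW: "wk E W" unfolding W wk_nth using p(2) by (auto simp del: upt_Suc)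
    have woW: "wo lab W = card {i. i < length v \<and> v ! i}"
      unfolding W wo_sum card_sum_if N_def[symmetric] using p(2)
      by (auto simp del: upt_Suc intro!: sum.cong)
    have pN: "p N \<in> S"
    proof (cases N)
      case 0 then show ?thesis using p s0 by simp
    next
      case (Suc m) then show ?thesis using p(2)[of m] subE by auto
    qed
    obtain P where P: "wk E P" "hd P = p N" "last P = s0" "P \<noteq> []" "length P \<le> D"
      using D pN s0 by blast
    obtain P' where P': "P = p N # P'" using P(2,4) by (cases P) auto
    define CW where "CW = xs @ p N # P'"
    have wkC: "wk E CW" unfolding CW_def using wk_append[of E xs "p N" P'] wkW P(1) P'
      by (simp add: W_def)
    have woC: "wo lab CW = wo lab W + wo lab P" unfolding CW_def W_def P' by (rule wo_append)
    have hdC: "hd CW = last CW"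
    proof -
      have "hd CW = s0" unfolding CW_def xs_def using p(1) by (cases N) (auto simp del: upt_Suc simp: upt_rec)
      moreover have "last CW = s0" using P(3) P' unfolding CW_def by (cases P') auto
      ultimately show ?thesis by simp
    qed
    have lenC: "length CW - 1 = N + length P'" unfolding CW_def xs_def by simp
    have "real (wo lab CW) \<le> tau * real (N + length P')"
      using closed_bound[OF wkC _ hdC] lenC unfolding CW_def by simp
    also have "\<dots> = tau * real N + tau * real (length P')" by (simp add: distrib_left)
    also have "tau * real (length P') \<le> real D"
    proof -
      have "tau * real (length P') \<le> 1 * real (length P')"
        using tau_le1 by (intro mult_right_mono) auto
      then show ?thesis using P(5) P' by simp
    qed
    finally have "real (wo lab CW) \<le> tau * real N + real D" by simp
    then show ?thesis using woC woW N_def by simp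
  qed
  then show ?thesis by blast
qed

end

lemma outp_len: "length (outp f m v t) = t"
  by (induction t) (auto simp: Let_def)

lemma outp_nth: "i < t \<Longrightarrow> outp f m v t ! i = (if v ! i then None else Some (f i m (outp f m v i)))"
proof (induction t)
  case (Suc t)
  show ?case
  proof (cases "i < t")
    case True then show ?thesis using Suc by (simp add: Let_def nth_append outp_len)
  next
    case False then have "i = t" using Suc by simp
    then show ?thesis by (simp add: Let_def nth_append outp_len)
  qed
qed simp

lemma rot1: "(\<Sum>k<l. h ((k + 1) mod l)) = (\<Sum>k<(l::nat). (h k :: nat))"
proof (cases l)
  case (Suc m)
  have "(\<Sum>k<Suc m. h ((k + 1) mod Suc m)) = (\<Sum>k<m. h ((k + 1) mod Suc m)) + h 0"
    by simp
  also have "(\<Sum>k<m. h ((k + 1) mod Suc m)) = (\<Sum>k<m. h (Suc k))"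
    by (rule sum.cong) auto
  finally show ?thesis using Suc by (simp add: sum.lessThan_Suc_shift del: sum.lessThan_Suc)
qed simp

lemma rot_sum: "(\<Sum>k<l. h ((k + i) mod l)) = (\<Sum>k<(l::nat). (h k :: nat))"
proof (induction i arbitrary: h)
  case (Suc i)
  have "(\<Sum>k<l. h ((k + Suc i) mod l)) = (\<Sum>k<l. (\<lambda>x. h ((x + i) mod l)) ((k + 1) mod l))"
    by (rule sum.cong) (auto simp: mod_add_left_eq)
  also have "\<dots> = (\<Sum>k<l. h ((k + i) mod l))" by (rule rot1)
  finally show ?case using Suc by simp
qed simp

lemma card_split: "card {i. i < (N::nat) \<and> \<not> P i} + card {i. i < N \<and> P i} = N"
  unfolding card_sum_if sum.distrib[symmetric] by (simp add: if_distrib cong: if_cong)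

context chan begin

lemma heavy_word: "\<exists>s v. s \<in> S \<and> admissible E lab s v \<and> length v = N \<and>
   tau * real N \<le> real (card {i. i < N \<and> v ! i})"
proof -
  obtain cs where cs: "simple_cycle E cs" "tau = real (cycle_ones lab cs) / real (length cs)"
    using tau_in by blast
  define l where "l = length cs"
  have l0: "l > 0" using cs unfolding simple_cycle_def l_def by simp
  define g where "g j = lab (cs ! j, cs ! ((j + 1) mod l))" for j
  define ind where "ind b = (if b then 1 else 0 :: nat)" for b
  define vk where "vk k = map (\<lambda>i. g ((k + i) mod l)) [0..<N]" for k
  define ones where "ones k = card {i. i < N \<and> vk k ! i}" for k
  have ones_sum: "ones k = (\<Sum>i<N. ind (g ((k + i) mod l)))" for k
    unfolding ones_def card_sum_if ind_def vk_def by (rule sum.cong) auto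
  have e: "cycle_ones lab cs = (\<Sum>k<l. ind (g k))"
    unfolding cycle_ones_def card_sum_if ind_def g_def l_def ..
  have tot: "(\<Sum>k<l. ones k) = N * cycle_ones lab cs"
  proof -
    have "(\<Sum>k<l. ones k) = (\<Sum>i<N. \<Sum>k<l. ind (g ((k + i) mod l)))"
      unfolding ones_sum by (rule sum.swap)
    also have "\<dots> = (\<Sum>i<N. \<Sum>k<l. ind (g k))" by (rule sum.cong[OF refl], rule rot_sum[where h="\<lambda>x. ind (g x)"])
    finally show ?thesis using e by simp
  qed
  have "\<exists>k<l. N * cycle_ones lab cs \<le> ones k * l"
  proof (rule ccontr)
    assume "\<not> ?thesis"
    then have "\<forall>k<l. ones k * l < N * cycle_ones lab cs" by auto
    then have "(\<Sum>k<l. ones k * l) < (\<Sum>k<l. N * cycle_ones lab cs)"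
      using l0 by (intro sum_strict_mono) auto
    then have "(\<Sum>k<l. ones k) * l < l * (N * cycle_ones lab cs)"
      by (simp add: sum_distrib_right)
    then show False using tot by simp
  qed
  then obtain k where k: "k < l" "N * cycle_ones lab cs \<le> ones k * l" by blast
  have "real N * real (cycle_ones lab cs) \<le> real (ones k) * real l"
    using k(2) by (metis of_nat_le_iff of_nat_mult)
  moreover have "real l * tau = real (cycle_ones lab cs)"
    using cs(2) l0 unfolding l_def[symmetric] by (simp add: field_simps)
  ultimately have "real l * (tau * real N) \<le> real l * real (ones k)"
    by (simp add: algebra_simps)
  then have bound: "tau * real N \<le> real (ones k)"
    using l0 by (simp add: mult_le_cancel_left_pos)
  have ad: "admissible E lab (cs ! k) (vk k)"
    unfolding admissible_def
  proof (intro exI[of _ "\<lambda>i. cs ! ((k + i) mod l)"] conjI allI impI)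
    show "cs ! ((k + 0) mod l) = cs ! k" using k by simp
    fix i assume "i < length (vk k)"
    then have i: "i < N" unfolding vk_def by simp
    define j where "j = (k + i) mod l"
    have j: "j < l" unfolding j_def using l0 by simp
    have jj: "(k + Suc i) mod l = (j + 1) mod l" unfolding j_def by (simp add: mod_Suc_eq)
    have edge: "(cs ! j, cs ! ((j + 1) mod l)) \<in> E"
      using cs(1) j unfolding simple_cycle_def l_def by blast
    show "(cs ! ((k + i) mod l), cs ! ((k + Suc i) mod l)) \<in> E"
      using edge jj unfolding j_def by metis
    have "vk k ! i = g j" unfolding vk_def j_def using i by simp
    then show "lab (cs ! ((k + i) mod l), cs ! ((k + Suc i) mod l)) = vk k ! i"
      using jj unfolding g_def j_def by metis
  qed
  have "cs ! k \<in> S" using cyc_set[OF cs(1)] k unfolding l_def by auto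
  then show ?thesis using ad bound unfolding ones_def by (intro exI[of _ "cs ! k"] exI[of _ "vk k"]) (auto simp: vk_def)
qed

lemma card_M_le:
  fixes f :: "nat \<Rightarrow> 'm \<Rightarrow> 'x::finite option list \<Rightarrow> 'x"
  assumes code: "zero_error_fb_code S E lab n M f" and s: "s \<in> S"
    and ad: "admissible E lab s v" and len: "length v = Suc n"
  shows "card M \<le> card (UNIV :: 'x set) ^ card {i. i < Suc n \<and> \<not> v ! i}"
proof -
  define zs where "zs = filter (\<lambda>i. \<not> v ! i) [0..<Suc n]"
  have setzs: "set zs = {i. i < Suc n \<and> \<not> v ! i}" unfolding zs_def by (auto simp del: upt_Suc)
  have lenzs: "length zs = card {i. i < Suc n \<and> \<not> v ! i}"
    using distinct_card[of zs] setzs unfolding zs_def by simp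
  define g where "g m = map (\<lambda>i. the (channel_output f m v ! i)) zs" for m
  have out: "channel_output f m v ! i = (if v ! i then None else Some (f i m (outp f m v i)))"
    and outl: "length (channel_output f m v) = Suc n" if "i < Suc n" for m i
    unfolding channel_output_def using outp_nth[of i "length v" f m v] that len outp_len by (auto simp del: outp.simps)
  have inj: "inj_on g M"
  proof (rule inj_onI, rule ccontr)
    fix m1 m2 assume m: "m1 \<in> M" "m2 \<in> M" "g m1 = g m2" "m1 \<noteq> m2"
    have "channel_output f m1 v = channel_output f m2 v"
    proof (rule nth_equalityI)
      show "length (channel_output f m1 v) = length (channel_output f m2 v)"
        using outl[of 0] by simp
      fix i assume "i < length (channel_output f m1 v)"
      then have i: "i < Suc n" using outl[of 0] by simp
      show "channel_output f m1 v ! i = channel_output f m2 v ! i"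
      proof (cases "v ! i")
        case True then show ?thesis using out[OF i] by simp
      next
        case False
        then have "i \<in> set zs" using setzs i by simp
        then have "the (channel_output f m1 v ! i) = the (channel_output f m2 v ! i)"
          using m(3) unfolding g_def by (auto simp: map_eq_conv)
        then show ?thesis using out[OF i] False by simp
      qed
    qed
    moreover have "channel_output f m1 v \<noteq> channel_output f m2 v"
      using code m s ad len unfolding zero_error_fb_code_def by blast
    ultimately show False by simp
  qed
  have fin: "finite M" using code unfolding zero_error_fb_code_def by simp
  have "card M = card (g ` M)" using card_image[OF inj] by simp
  also have "\<dots> \<le> card {xs. set xs \<subseteq> (UNIV :: 'x set) \<and> length xs = length zs}"
    by (rule card_mono[OF finite_lists_length_eq]) (auto simp: g_def)
  also have "\<dots> = card (UNIV :: 'x set) ^ length zs" by (rule card_lists_length_eq) simp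
  finally show ?thesis using lenzs by simp
qed

lemma rate_le:
  fixes f :: "nat \<Rightarrow> 'm \<Rightarrow> 'x::finite option list \<Rightarrow> 'x"
  assumes q: "card (UNIV :: 'x set) \<ge> 2" and code: "zero_error_fb_code S E lab n M f"
  shows "log (real (card (UNIV :: 'x set))) (real (card M)) / real (Suc n) \<le> 1 - tau"
proof -
  obtain s v where sv: "s \<in> S" "admissible E lab s v" "length v = Suc n"
    "tau * real (Suc n) \<le> real (card {i. i < Suc n \<and> v ! i})"
    using heavy_word by blast
  define z where "z = card {i. i < Suc n \<and> \<not> v ! i}"
  have cM: "card M \<le> card (UNIV :: 'x set) ^ z" using card_M_le[OF code sv(1-3)] unfolding z_def .
  have split: "z + card {i. i < Suc n \<and> v ! i} = Suc n" unfolding z_def by (rule card_split)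
  have M0: "card M > 0" using code unfolding zero_error_fb_code_def by (simp add: card_gt_0_iff)
  have q1: "real (card (UNIV :: 'x set)) > 1" using q by simp
  have "log (real (card (UNIV :: 'x set))) (real (card M)) \<le> log (real (card (UNIV :: 'x set))) (real (card (UNIV :: 'x set) ^ z))"
    using cM M0 q1 by (subst log_le_cancel_iff) auto
  also have "\<dots> = real z" using q1 by (simp add: log_nat_power)
  finally have lz: "log (real (card (UNIV :: 'x set))) (real (card M)) \<le> real z" .
  have "real z \<le> (1 - tau) * real (Suc n)"
    using split sv(4) by (simp add: algebra_simps)
  then have "log (real (card (UNIV :: 'x set))) (real (card M)) \<le> (1 - tau) * real (Suc n)" using lz by linarith
  then show ?thesis by (simp add: divide_le_eq)
qed

end

definition rec :: "'x option list \<Rightarrow> 'x list" where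
  "rec ys = map the (filter (\<lambda>y. y \<noteq> None) ys)"

lemma rec_outp_Suc: "rec (outp f m v (Suc t)) =
   rec (outp f m v t) @ (if v ! t then [] else [f t m (outp f m v t)])"
  by (simp add: rec_def Let_def)

lemma rec_len: "length (rec (outp f m v t)) = card {i. i < t \<and> \<not> v ! i}"
proof (induction t)
  case (Suc t)
  have "card {i. i < Suc t \<and> \<not> v ! i} = card {i. i < t \<and> \<not> v ! i} + (if \<not> v ! t then 1 else 0)"
    unfolding card_sum_if by simp
  then show ?case using Suc by (simp add: rec_outp_Suc del: outp.simps)
qed (simp add: rec_def)

lemma rec_inv:
  assumes hm: "length hm = k"
    and f: "\<And>t ys. f t m ys = (if length (rec ys) < k then hm ! length (rec ys) else undefined)"
  shows "take k (rec (outp f m v t)) = take (length (rec (outp f m v t))) hm"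
proof (induction t)
  case 0 then show ?case by (simp add: rec_def)
next
  case (Suc t)
  define r where "r = rec (outp f m v t)"
  have IH: "take k r = take (length r) hm" using Suc unfolding r_def .
  show ?case
  proof (cases "v ! t")
    case True then show ?thesis using IH by (simp add: rec_outp_Suc r_def[symmetric] del: outp.simps)
  next
    case False
    then have e: "rec (outp f m v (Suc t)) = r @ [f t m (outp f m v t)]"
      by (simp add: rec_outp_Suc r_def del: outp.simps)
    show ?thesis
    proof (cases "length r < k")
      case True
      then have "f t m (outp f m v t) = hm ! length r" using f r_def by simp
      then show ?thesis unfolding e using True IH hm
        by (simp add: take_Suc_conv_app_nth)
    next
      case False
      then show ?thesis unfolding e using IH hm by simp
    qed
  qed
qed

context chan begin

lemma good_code:
  assumes q: "card (UNIV :: 'x::finite set) \<ge> 2"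
    and D: "\<forall>s0 v. s0 \<in> S \<longrightarrow> admissible E lab s0 v \<longrightarrow>
             real (card {i. i < length v \<and> v ! i}) \<le> tau * real (length v) + real D"
  shows "\<exists>M (f :: nat \<Rightarrow> nat \<Rightarrow> 'x option list \<Rightarrow> 'x). zero_error_fb_code S E lab n M f \<and>
     (1 - tau) - (real D + 1) / real (Suc n) \<le> log (real (card (UNIV :: 'x set))) (real (card M)) / real (Suc n)"
proof -
  define N where "N = Suc n"
  define x where "x = (1 - tau) * real N - real D"
  define k where "k = nat \<lfloor>x\<rfloor>"
  define L where "L = {xs. set xs \<subseteq> (UNIV :: 'x set) \<and> length xs = k}"
  have finL: "finite L" unfolding L_def by (rule finite_lists_length_eq) simp
  have cardL: "card L = card (UNIV :: 'x set) ^ k" unfolding L_def by (rule card_lists_length_eq) simp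
  obtain h where h: "bij_betw h {0..<card L} L" using ex_bij_betw_nat_finite[OF finL] by blast
  define M where "M = {0..<card L}"
  define f :: "nat \<Rightarrow> nat \<Rightarrow> 'x option list \<Rightarrow> 'x" where
    "f t m ys = (if length (rec ys) < k then h m ! length (rec ys) else undefined)" for t m ys
  have hlen: "m \<in> M \<Longrightarrow> length (h m) = k" for m
    using h unfolding bij_betw_def M_def L_def by auto
  have q0: "card (UNIV :: 'x set) > 0" using q by simp
  have cardM: "card M = card (UNIV :: 'x set) ^ k" unfolding M_def using cardL by simp
  have code: "zero_error_fb_code S E lab n M f"
    unfolding zero_error_fb_code_def
  proof (intro conjI ballI allI impI)
    show "finite M" unfolding M_def by simp
    show "M \<noteq> {}" using cardM q0 unfolding M_def by auto
    fix m1 m2 s1 s2 v1 v2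
    assume m: "m1 \<in> M" "m2 \<in> M" "s1 \<in> S" "s2 \<in> S" "m1 \<noteq> m2" "length v1 = Suc n"
      "length v2 = Suc n" "admissible E lab s1 v1" "admissible E lab s2 v2"
    show "channel_output f m1 v1 \<noteq> channel_output f m2 v2"
    proof
      assume eq: "channel_output f m1 v1 = channel_output f m2 v2"
      define Y where "Y = channel_output f m1 v1"
      have Y2: "Y = channel_output f m2 v2" using eq Y_def by simp
      have z1: "length (rec Y) = card {i. i < N \<and> \<not> v1 ! i}"
        unfolding Y_def channel_output_def rec_len using m(6) N_def by simp
      have "card {i. i < N \<and> \<not> v1 ! i} + card {i. i < N \<and> v1 ! i} = N" by (rule card_split)
      moreover have "real (card {i. i < N \<and> v1 ! i}) \<le> tau * real N + real D"
        using D m(3,8) m(6) unfolding N_def by metis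
      ultimately have "x \<le> real (length (rec Y))" unfolding z1 x_def
        by (simp add: algebra_simps)
      then have "\<lfloor>x\<rfloor> \<le> \<lfloor>real (length (rec Y))\<rfloor>" by (rule floor_mono)
      then have "\<lfloor>x\<rfloor> \<le> int (length (rec Y))" by simp
      then have kle: "k \<le> length (rec Y)" unfolding k_def by (simp add: nat_le_iff)
      have "take k (rec Y) = take (length (rec Y)) (h m1)"
        unfolding Y_def channel_output_def by (rule rec_inv[OF hlen[OF m(1)], where m=m1]) (simp add: f_def)
      also have "\<dots> = h m1" using kle hlen[OF m(1)] by simp
      finally have 1: "take k (rec Y) = h m1" .
      have "take k (rec Y) = take (length (rec Y)) (h m2)"
        unfolding Y2 channel_output_def by (rule rec_inv[OF hlen[OF m(2)], where m=m2]) (simp add: f_def)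
      also have "\<dots> = h m2" using kle hlen[OF m(2)] by simp
      finally have "h m1 = h m2" using 1 by simp
      then have "m1 = m2" using h m(1,2) unfolding bij_betw_def inj_on_def M_def by blast
      then show False using m(5) by simp
    qed
  qed
  have q1: "real (card (UNIV :: 'x set)) > 1" using q by simp
  have lg: "log (real (card (UNIV :: 'x set))) (real (card M)) = real k"
    unfolding cardM using q1 by (simp add: log_nat_power)
  have "x - 1 \<le> real k" unfolding k_def by linarith
  then have "(x - 1) / real N \<le> real k / real N" by (rule divide_right_mono) simp
  moreover have "(x - 1) / real N = (1 - tau) - (real D + 1) / real N"
    unfolding x_def N_def by (simp add: field_simps)
  ultimately have "(1 - tau) - (real D + 1) / real N \<le> real k / real N" by simp
  then show ?thesis using code lg N_def by auto
qed

end

theorem theorem3: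
  fixes S :: "'s set" and E :: "('s \<times> 's) set" and lab :: "'s \<times> 's \<Rightarrow> bool"
  assumes "card (UNIV :: 'x::finite set) \<ge> 2"
    and "fs_erasure_channel S E lab"
  shows "C0f TYPE('x) S E lab = 1 - max_ratio E lab"
proof -
  interpret chan S E lab using assms(2) by unfold_locales
  obtain D where D: "\<forall>s0 v. s0 \<in> S \<longrightarrow> admissible E lab s0 v \<longrightarrow>
      real (card {i. i < length v \<and> v ! i}) \<le> tau * real (length v) + real D"
    using walk_bound by blast
  define R where "R = {r. \<exists>n (M :: nat set) (f :: nat \<Rightarrow> nat \<Rightarrow> 'x option list \<Rightarrow> 'x).
        zero_error_fb_code S E lab n M f \<and>
        r = log (real (card (UNIV :: 'x set))) (real (card M)) / real (Suc n)}"
  have C: "C0f TYPE('x) S E lab = Sup R" unfolding C0f_def R_def ..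
  have up: "r \<le> 1 - tau" if "r \<in> R" for r
    using that rate_le[OF assms(1)] unfolding R_def by blast
  have lo: "\<exists>r\<in>R. 1 - tau - (real D + 1) / real (Suc n) \<le> r" for n
    using good_code[OF assms(1) D, of n] unfolding R_def by blast
  show ?thesis unfolding C
  proof (rule cSup_eq)
    show "r \<le> 1 - tau" if "r \<in> R" for r using up that .
    fix y assume y: "\<And>r. r \<in> R \<Longrightarrow> r \<le> y"
    show "1 - tau \<le> y"
    proof (rule ccontr)
      assume "\<not> 1 - tau \<le> y"
      define d where "d = 1 - tau - y"
      have d: "d > 0" using \<open>\<not> 1 - tau \<le> y\<close> unfolding d_def by simp
      obtain n where n: "(real D + 1) / d < real n" using reals_Archimedean2 by blast
      have "real D + 1 < d * real n" using n d by (simp add: divide_less_eq mult.commute)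
      also have "\<dots> \<le> d * real (Suc n)" using d by simp
      finally have "(real D + 1) / real (Suc n) < d" by (simp add: divide_less_eq mult.commute)
      moreover obtain r where "r \<in> R" "1 - tau - (real D + 1) / real (Suc n) \<le> r" using lo by blast
      ultimately show False using y unfolding d_def by fastforce
    qed
  qed
qed

end
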